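(* Let $E$ be a nonempty finite set and let $\mathcal{I}, \mathcal{I}' \subseteq 2^E$ be constructible families with $\mathrm{Max}(\mathcal{I}) = \mathrm{Max}(\mathcal{I}')$. Then the rank function $\rho'$ associated with $\mathcal{I}'$ coincides with the rank function $\rho$ associated with $\mathcal{I}$.
   Context: For a family $\mathcal{I} \subseteq 2^E$, $\mathrm{Max}(\mathcal{I})$ denotes the set of maximal members of $\mathcal{I}$ with respect to inclusion. For $I \in \mathcal{I}$, $\mathrm{ex}_{\mathcal{I}}(I) := \{e \in I \mid I \setminus \{e\} \in \mathcal{I}\}$. A nonempty family $\mathcal{I}$ is constructible if $\mathrm{ex}_{\mathcal{I}}(I) \neq \emptyset$ for all $I \in \mathcal{I}\setminus\{\emptyset\}$. The rank function of a constructible family $\mathcal{I}$ is $\rho(X) = \max_{I \in \mathcal{I}} |X \cap I|$ for $X \subseteq E$ (equivalently the maximum of $|X\cap B|$ over bases $B$, i.e. members $B \in \mathcal{I}$ such that $B \cup\{e\} \notin \mathcal{I}$ for all $e \in E\setminus B$). *)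

theory Defs
  imports Main
begin

definition Maxl :: "'a set set \<Rightarrow> 'a set set" where
  "Maxl \<F> = {I \<in> \<F>. \<forall>J\<in>\<F>. I \<subseteq> J \<longrightarrow> J = I}"

definition ex_fam :: "'a set set \<Rightarrow> 'a set \<Rightarrow> 'a set" where
  "ex_fam \<F> I = {e \<in> I. I - {e} \<in> \<F>}"

definition constructible :: "'a set set \<Rightarrow> bool" where
  "constructible \<F> \<longleftrightarrow> \<F> \<noteq> {} \<and> (\<forall>I\<in>\<F> - {{}}. ex_fam \<F> I \<noteq> {})"

definition rank_fam :: "'a set set \<Rightarrow> 'a set \<Rightarrow> nat" where
  "rank_fam \<F> X = Max ((\<lambda>I. card (X \<inter> I)) ` \<F>)"

end

theory Submission
  imports Defs
begin

lemma ex_maxl: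
  assumes fin: "finite E" and sub: "F \<subseteq> Pow E" and I: "I \<in> F"
  shows "\<exists>J\<in>Maxl F. I \<subseteq> J"
proof -
  let ?S = "{J\<in>F. I \<subseteq> J}"
  have finF: "finite F" using fin sub by (meson finite_Pow_iff finite_subset)
  have fS: "finite ?S" using finF by simp
  have neS: "?S \<noteq> {}" using I by auto
  obtain J where J: "J \<in> ?S" "card J = Max (card ` ?S)"
    using Max_in[of "card ` ?S"] fS neS by fastforce
  have JF: "J \<in> F" using J by simp
  have "\<forall>K\<in>F. J \<subseteq> K \<longrightarrow> K = J"
  proof (intro ballI impI)
    fix K assume K: "K \<in> F" "J \<subseteq> K"
    have "K \<in> ?S" using K J by auto
    hence "card K \<le> card J" using J fS by simp
    moreover have "finite K" using K sub fin finite_subset by blast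
    ultimately show "K = J" using K card_seteq by blast
  qed
  hence "J \<in> Maxl F" using JF unfolding Maxl_def by blast
  thus ?thesis using J by auto
qed

lemma rank_maxl:
  assumes fin: "finite E" and sub: "F \<subseteq> Pow E" and ne: "F \<noteq> {}"
  shows "rank_fam F X = Max ((\<lambda>I. card (X \<inter> I)) ` Maxl F)"
proof -
  have finF: "finite F" using fin sub by (meson finite_Pow_iff finite_subset)
  have MF: "Maxl F \<subseteq> F" unfolding Maxl_def by auto
  obtain I where I: "I \<in> F" using ne by auto
  then obtain J where J: "J \<in> Maxl F" using ex_maxl[OF fin sub] by blast
  have fM: "finite (Maxl F)" using finF MF by (rule rev_finite_subset)
  show ?thesis unfolding rank_fam_def
  proof (rule antisym)
    show "Max ((\<lambda>I. card (X \<inter> I)) ` F) \<le> Max ((\<lambda>I. card (X \<inter> I)) ` Maxl F)"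
    proof (rule Max.boundedI)
      show "finite ((\<lambda>I. card (X \<inter> I)) ` F)" using finF by simp
      show "(\<lambda>I. card (X \<inter> I)) ` F \<noteq> {}" using ne by simp
    next
      fix y assume "y \<in> (\<lambda>I. card (X \<inter> I)) ` F"
      then obtain I where "I \<in> F" and y: "y = card (X \<inter> I)" by blast
      then obtain K where K: "K \<in> Maxl F" "I \<subseteq> K" using ex_maxl[OF fin sub] by blast
      have "K \<in> F" using K MF by blast
      hence "K \<subseteq> E" using sub by blast
      hence "finite K" using fin by (rule finite_subset)
      hence "card (X \<inter> I) \<le> card (X \<inter> K)" using K by (intro card_mono) auto
      also have "\<dots> \<le> Max ((\<lambda>I. card (X \<inter> I)) ` Maxl F)" using K fM by (intro Max_ge) auto
      finally show "y \<le> Max ((\<lambda>I. card (X \<inter> I)) ` Maxl F)" using y by simp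
    qed
    show "Max ((\<lambda>I. card (X \<inter> I)) ` Maxl F) \<le> Max ((\<lambda>I. card (X \<inter> I)) ` F)"
    proof (rule Max_mono)
      show "(\<lambda>I. card (X \<inter> I)) ` Maxl F \<subseteq> (\<lambda>I. card (X \<inter> I)) ` F" using MF by (rule image_mono)
      show "(\<lambda>I. card (X \<inter> I)) ` Maxl F \<noteq> {}" using J by blast
      show "finite ((\<lambda>I. card (X \<inter> I)) ` F)" using finF by simp
    qed
  qed
qed

theorem proposition3p2:
  fixes E :: "'a set" and \<I> \<I>' :: "'a set set"
  assumes "finite E" and "E \<noteq> {}"
    and "\<I> \<subseteq> Pow E" and "\<I>' \<subseteq> Pow E"
    and "constructible \<I>" and "constructible \<I>'"
    and "Maxl \<I> = Maxl \<I>'"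
  shows "\<forall>X \<subseteq> E. rank_fam \<I>' X = rank_fam \<I> X"
proof -
  have a: "\<I> \<noteq> {}" "\<I>' \<noteq> {}" using assms(5,6) unfolding constructible_def by auto
  show ?thesis using rank_maxl[OF assms(1) assms(3) a(1)] rank_maxl[OF assms(1) assms(4) a(2)] assms(7)
    by simp
qed

end
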